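(* Let $(X,Y)$ be random with $Y\in\{0,1\}$, let $f$ take values in $S=\{s_1,\dots,s_B\}\subseteq[0,1]$, and let $T_n=\{(x_j,y_j)\}_{j=1}^n$ be i.i.d. from $(X,Y)$. Let $0\le c<0.5$ and $0<\delta<1$. Conditional on any realization of $(f(x_1),\dots,f(x_n))$ for which $|\hat p_i-p_i|<c\,p_i$ for all $i$, with probability at least $1-\delta$, $0\le \sum_{i=1}^B\hat p_i(\hat y_i-y_i^* )^2\le\frac{B}{2n}\log\frac{2B}{\delta}$.
   Context: $p_i=\Pr(f(X)=s_i)$, $y_i^*=\mathbb{E}[Y\mid f(X)=s_i]$. $\hat p_i=|\{j:f(x_j)=s_i\}|/n$ and $\hat y_i$ is the average of $y_j$ over $j$ with $f(x_j)=s_i$. *)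

theory Defs
  imports "HOL-Probability.Probability"
begin

definition phat :: "nat \<Rightarrow> (nat \<Rightarrow> real) \<Rightarrow> real \<Rightarrow> real" where
  "phat n v s = real (card {j. j < n \<and> v j = s}) / real n"

definition yhat :: "nat \<Rightarrow> (nat \<Rightarrow> real) \<Rightarrow> (nat \<Rightarrow> real) \<Rightarrow> real \<Rightarrow> real" where
  "yhat n v y s = (\<Sum>j | j < n \<and> v j = s. y j) / real (card {j. j < n \<and> v j = s})"

text \<open>Population quantities, for D the joint law of (X,Y):
  pop_p D f s = Pr(f(X) = s),  ystar D f s = E[Y | f(X) = s].\<close>
definition pop_p :: "('x \<times> real) measure \<Rightarrow> ('x \<Rightarrow> real) \<Rightarrow> real \<Rightarrow> real" where
  "pop_p D f s = measure D {z \<in> space D. f (fst z) = s}"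

definition ystar :: "('x \<times> real) measure \<Rightarrow> ('x \<Rightarrow> real) \<Rightarrow> real \<Rightarrow> real" where
  "ystar D f s = (\<integral>z. snd z * indicator {z \<in> space D. f (fst z) = s} z \<partial>D) / pop_p D f s"

definition condP :: "'w measure \<Rightarrow> ('w \<Rightarrow> bool) \<Rightarrow> ('w \<Rightarrow> bool) \<Rightarrow> real" where
  "condP M A Q = measure M {\<omega> \<in> space M. A \<omega> \<and> Q \<omega>} / measure M {\<omega> \<in> space M. Q \<omega>}"

end

theory Submission imports Defs begin

lemma term_bound:
  fixes a y L e :: real and m n :: nat
  assumes m: "m > 0" and n: "n > 0" and a: "\<bar>a - m*y\<bar> < e" and e: "e = sqrt (m*L/2)" and L: "L \<ge> 0"
  shows "m/n * (a/m - y)^2 \<le> L/(2*real n)"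
proof -
  have "\<bar>a - m*y\<bar>^2 \<le> e^2"
    using a by (intro power_mono) auto
  hence "(a - m*y)^2 \<le> e^2" by simp
  also have "e^2 = m*L/2" using e L by simp
  finally have sq: "(a - m*y)^2 \<le> m*L/2" .
  have "a/m - y = (a - m*y)/m" using m by (simp add: field_simps)
  hence "m/n * (a/m - y)^2 = (a - m*y)^2 / (n*m)" using m n by (simp add: power2_eq_square field_simps)
  also have "\<dots> \<le> (m*L/2) / (n*m)" using sq m n by (intro divide_right_mono) auto
  also have "\<dots> = L/(2*real n)" using m n by (simp add: field_simps)
  finally show ?thesis .
qed

theorem mainTheorem9:
  fixes M :: "'w measure" and N :: "'x measure" and D :: "('x \<times> real) measure"
    and Xs :: "nat \<Rightarrow> 'w \<Rightarrow> 'x" and Ys :: "nat \<Rightarrow> 'w \<Rightarrow> real"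
    and f :: "'x \<Rightarrow> real" and S :: "real set" and n :: nat and c \<delta> :: real
    and r :: "nat \<Rightarrow> real"
  assumes "prob_space M"
    and "0 < n"
    and "prob_space.indep_vars M (\<lambda>_. N \<Otimes>\<^sub>M borel) (\<lambda>j \<omega>. (Xs j \<omega>, Ys j \<omega>)) {..<n}"
    and "\<forall>j<n. distr M (N \<Otimes>\<^sub>M borel) (\<lambda>\<omega>. (Xs j \<omega>, Ys j \<omega>)) = D"
    and "AE z in D. snd z \<in> {0, 1}"
    and "f \<in> borel_measurable N"
    and "finite S" and "S \<subseteq> {0..1}" and "\<forall>x\<in>space N. f x \<in> S"
    and "0 \<le> c" and "c < 0.5" and "0 < \<delta>" and "\<delta> < 1"
    and "\<forall>j<n. r j \<in> S"
    and "\<forall>s\<in>S. \<bar>phat n r s - pop_p D f s\<bar> < c * pop_p D f s"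
  shows "condP M
      (\<lambda>\<omega>. 0 \<le> (\<Sum>s\<in>S. phat n (\<lambda>j. f (Xs j \<omega>)) s
                 * (yhat n (\<lambda>j. f (Xs j \<omega>)) (\<lambda>j. Ys j \<omega>) s - ystar D f s)\<^sup>2)
          \<and> (\<Sum>s\<in>S. phat n (\<lambda>j. f (Xs j \<omega>)) s
                 * (yhat n (\<lambda>j. f (Xs j \<omega>)) (\<lambda>j. Ys j \<omega>) s - ystar D f s)\<^sup>2)
            \<le> real (card S) / (2 * real n) * ln (2 * real (card S) / \<delta>))
      (\<lambda>\<omega>. \<forall>j<n. f (Xs j \<omega>) = r j)
    \<ge> 1 - \<delta>"
proof -
  interpret prob_space M by fact
  note fm[measurable] = assms(6)
  define Z where "Z j = (\<lambda>\<omega>. (Xs j \<omega>, Ys j \<omega>))" for j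
  have ind: "indep_vars (\<lambda>_. N \<Otimes>\<^sub>M borel) Z {..<n}"
    using assms(3) unfolding Z_def by simp
  have Zm: "Z j \<in> measurable M (N \<Otimes>\<^sub>M borel)" if "j < n" for j
    using ind that unfolding indep_vars_def2 by auto
  have Xm: "Xs j \<in> measurable M N" if "j < n" for j
  proof -
    have "(\<lambda>\<omega>. fst (Z j \<omega>)) \<in> measurable M N"
      using Zm[OF that] by measurable
    thus ?thesis by (simp add: Z_def)
  qed
  have Ym: "Ys j \<in> borel_measurable M" if "j < n" for j
  proof -
    have "(\<lambda>\<omega>. snd (Z j \<omega>)) \<in> borel_measurable M"
      using Zm[OF that] by measurable
    thus ?thesis by (simp add: Z_def)
  qed
  have Dj: "D = distr M (N \<Otimes>\<^sub>M borel) (Z j)" if "j < n" for j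
    using assms(4) that unfolding Z_def by simp
  have D0: "D = distr M (N \<Otimes>\<^sub>M borel) (Z 0)" using Dj assms(2) by simp
  have spaceD: "space D = space (N \<Otimes>\<^sub>M borel)" by (subst D0) simp
  have setsD: "sets D = sets (N \<Otimes>\<^sub>M borel)" by (subst D0) simp
  have psD: "prob_space D" unfolding D0 using Zm assms(2) by (intro prob_space_distr) auto
  define R :: "real \<Rightarrow> ('x \<times> real) set" where "R s = {z \<in> space (N \<Otimes>\<^sub>M borel). f (fst z) = s}" for s
  have Rsets: "R s \<in> sets (N \<Otimes>\<^sub>M borel)" for s
    unfolding R_def by measurable
  have popR: "pop_p D f s = measure D (R s)" for s
    by (simp add: pop_p_def R_def spaceD)
  have prodlem: "prob {\<omega>\<in>space M. \<forall>j<n. Z j \<omega> \<in> B j} = (\<Prod>j<n. measure D (B j))"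
    if B: "\<And>j. j < n \<Longrightarrow> B j \<in> sets (N \<Otimes>\<^sub>M borel)" for B
  proof -
    have indS: "indep_sets (\<lambda>j. {Z j -` A \<inter> space M | A. A \<in> sets (N \<Otimes>\<^sub>M borel)}) {..<n}"
      using ind unfolding indep_vars_def2 by auto
    have "prob (\<Inter>j\<in>{..<n}. Z j -` B j \<inter> space M) = (\<Prod>j<n. prob (Z j -` B j \<inter> space M))"
      by (rule indep_setsD[OF indS]) (use assms(2) B in auto)
    moreover have "{\<omega>\<in>space M. \<forall>j<n. Z j \<omega> \<in> B j} = (\<Inter>j\<in>{..<n}. Z j -` B j \<inter> space M)"
      using assms(2) by auto
    moreover have "prob (Z j -` B j \<inter> space M) = measure D (B j)" if "j < n" for j
      using that by (simp add: Dj[OF that] measure_distr Zm B)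
    ultimately show ?thesis by simp
  qed
  have Zsp: "Z j \<omega> \<in> space (N \<Otimes>\<^sub>M borel)" if "j < n" "\<omega> \<in> space M" for j \<omega>
    using measurable_space[OF Zm[OF that(1)] that(2)] .
  have ppos: "pop_p D f s > 0" if "s \<in> S" for s
  proof -
    have "0 \<le> \<bar>phat n r s - pop_p D f s\<bar>" by simp
    also have "\<dots> < c * pop_p D f s" using assms(15) that by auto
    finally have "0 < c * pop_p D f s" .
    moreover have "pop_p D f s \<ge> 0" by (simp add: pop_p_def)
    ultimately show ?thesis using assms(10) by (simp add: zero_less_mult_iff)
  qed
  define Q where "Q = {\<omega>\<in>space M. \<forall>j<n. f (Xs j \<omega>) = r j}"
  have QZ: "Q = {\<omega>\<in>space M. \<forall>j<n. Z j \<omega> \<in> R (r j)}"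
    unfolding Q_def R_def using Zsp by (auto simp: Z_def)
  have PQ: "prob Q = (\<Prod>j<n. pop_p D f (r j))"
    unfolding QZ popR by (rule prodlem) (rule Rsets)
  have PQpos: "prob Q > 0"
    unfolding PQ using ppos assms(14) by (intro prod_pos) auto
  have Qsets: "Q \<in> events"
  proof -
    have "{\<omega>\<in>space M. \<forall>j\<in>{..<n}. Z j \<omega> \<in> R (r j)} \<in> events"
    proof (intro sets.sets_Collect_finite_All)
      fix j assume "j \<in> {..<n}"
      hence "Z j -` R (r j) \<inter> space M \<in> events" using measurable_sets[OF Zm Rsets] by auto
      moreover have "{\<omega> \<in> space M. Z j \<omega> \<in> R (r j)} = Z j -` R (r j) \<inter> space M" by auto
      ultimately show "{\<omega> \<in> space M. Z j \<omega> \<in> R (r j)} \<in> events" by simp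
    qed simp
    thus ?thesis unfolding QZ by (simp only: lessThan_iff Ball_def)
  qed
  define M' where "M' = uniform_measure M Q"
  have eQ: "emeasure M Q \<noteq> 0" "emeasure M Q \<noteq> \<infinity>"
    using PQpos by (auto simp: emeasure_eq_measure)
  have psM': "prob_space M'" unfolding M'_def by (rule prob_space_uniform_measure[OF eQ])
  have mM': "measure M' A = measure M (Q \<inter> A) / prob Q" if "A \<in> events" for A
    unfolding M'_def using measure_uniform_measure[OF eQ that] .
  have sM'[simp]: "space M' = space M" "sets M' = sets M" by (simp_all add: M'_def)
  have Lem: "measure M' {\<omega>\<in>space M. \<forall>j\<in>J. Ys j \<omega> \<in> C j}
     = (\<Prod>j\<in>J. measure D (R (r j) \<inter> snd -` C j) / pop_p D f (r j))"
    if J: "J \<subseteq> {..<n}" and C: "\<And>j. j \<in> J \<Longrightarrow> C j \<in> sets borel" for J C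
  proof -
    have finJ: "finite J" using J finite_subset by blast
    define B where "B j = (if j \<in> J then R (r j) \<inter> snd -` C j else R (r j))" for j
    have RC: "R s \<inter> snd -` C' \<in> sets (N \<Otimes>\<^sub>M borel)" if "C' \<in> sets borel" for s C'
    proof -
      have "R s \<inter> snd -` C' = R s \<inter> (snd -` C' \<inter> space (N \<Otimes>\<^sub>M borel))"
        using sets.sets_into_space[OF Rsets] by auto
      also have "\<dots> \<in> sets (N \<Otimes>\<^sub>M borel)"
        by (intro sets.Int Rsets measurable_sets[OF measurable_snd]) (use that in simp)
      finally show ?thesis .
    qed
    have Bs: "B j \<in> sets (N \<Otimes>\<^sub>M borel)" for j
      unfolding B_def using RC C Rsets by auto
    have Aset: "{\<omega>\<in>space M. \<forall>j\<in>J. Ys j \<omega> \<in> C j} \<in> events"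
    proof (intro sets.sets_Collect_finite_All finJ)
      fix j assume "j \<in> J"
      hence "Ys j -` C j \<inter> space M \<in> events" using measurable_sets[OF Ym C] J by auto
      moreover have "{\<omega> \<in> space M. Ys j \<omega> \<in> C j} = Ys j -` C j \<inter> space M" by auto
      ultimately show "{\<omega> \<in> space M. Ys j \<omega> \<in> C j} \<in> events" by simp
    qed
    have "Q \<inter> {\<omega>\<in>space M. \<forall>j\<in>J. Ys j \<omega> \<in> C j} = {\<omega>\<in>space M. \<forall>j<n. Z j \<omega> \<in> B j}"
      unfolding QZ B_def using J by (auto simp: Z_def)
    hence "measure M' {\<omega>\<in>space M. \<forall>j\<in>J. Ys j \<omega> \<in> C j} = (\<Prod>j<n. measure D (B j)) / (\<Prod>j<n. pop_p D f (r j))"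
      using mM'[OF Aset] prodlem[OF Bs] PQ by simp
    also have "\<dots> = (\<Prod>j<n. measure D (B j) / pop_p D f (r j))"
      by (simp add: prod_dividef)
    also have "\<dots> = (\<Prod>j<n. if j \<in> J then measure D (R (r j) \<inter> snd -` C j) / pop_p D f (r j) else 1)"
    proof (intro prod.cong refl)
      fix j assume "j \<in> {..<n}"
      hence "pop_p D f (r j) > 0" using ppos assms(14) by auto
      thus "measure D (B j) / pop_p D f (r j) = (if j \<in> J then measure D (R (r j) \<inter> snd -` C j) / pop_p D f (r j) else 1)"
        by (auto simp: B_def popR)
    qed
    also have "\<dots> = (\<Prod>j\<in>{..<n} \<inter> J. measure D (R (r j) \<inter> snd -` C j) / pop_p D f (r j))"
      by (rule prod.inter_restrict[symmetric]) simp
    also have "{..<n} \<inter> J = J" using J by auto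
    finally show ?thesis .
  qed
  interpret P': prob_space M' by (rule psM')
  note Rsets[measurable]
  have b01: "{0::real, 1} \<in> sets borel" by (intro borel_closed) simp
  have b1: "{1::real} \<in> sets borel" by simp
  have bI: "{0::real..1} \<in> sets borel" by simp
  have RC2: "R s \<inter> snd -` C' \<in> sets (N \<Otimes>\<^sub>M borel)" if "C' \<in> sets borel" for s C'
  proof -
    have "R s \<inter> snd -` C' = R s \<inter> (snd -` C' \<inter> space (N \<Otimes>\<^sub>M borel))"
      using sets.sets_into_space[OF Rsets] by auto
    also have "\<dots> \<in> sets (N \<Otimes>\<^sub>M borel)"
      by (intro sets.Int Rsets measurable_sets[OF measurable_snd]) (use that in simp)
    finally show ?thesis .
  qed
  have mD01: "measure D (R s \<inter> snd -` {0,1}) = measure D (R s)" for s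
  proof (rule measure_eq_AE)
    show "AE z in D. (z \<in> R s \<inter> snd -` {0, 1}) = (z \<in> R s)"
      by (rule eventually_mono[OF assms(5)]) auto
  qed (auto simp: setsD RC2[OF b01] Rsets)
  have AE01: "AE \<omega> in M'. Ys j \<omega> \<in> {0,1}" if j: "j < n" for j
  proof -
    have "measure M' {\<omega>\<in>space M. \<forall>i\<in>{j}. Ys i \<omega> \<in> {0,1}} = measure D (R (r j) \<inter> snd -` {0,1}) / pop_p D f (r j)"
      using Lem[of "{j}" "\<lambda>_. {0,1}"] j b01 by simp
    also have "\<dots> = 1" using mD01 popR ppos j assms(14) by (metis divide_self less_irrefl)
    finally have "measure M' {\<omega>\<in>space M. Ys j \<omega> \<in> {0,1}} = 1" by simp
    moreover have "{\<omega>\<in>space M. Ys j \<omega> \<in> {0,1}} \<in> sets M'"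
    proof -
      have "Ys j -` {0,1} \<inter> space M \<in> events" using measurable_sets[OF Ym[OF j] b01] .
      moreover have "{\<omega>\<in>space M. Ys j \<omega> \<in> {0,1}} = Ys j -` {0,1} \<inter> space M" by auto
      ultimately show ?thesis by simp
    qed
    ultimately have "AE \<omega> in M'. \<omega> \<in> {\<omega>\<in>space M. Ys j \<omega> \<in> {0,1}}"
      using P'.prob_eq_1 by blast
    thus ?thesis by (rule eventually_mono) auto
  qed
  have EY: "integral\<^sup>L M' (Ys j) = measure D (R (r j) \<inter> snd -` {1}) / pop_p D f (r j)" if j: "j < n" for j
  proof -
    have YmM': "Ys j \<in> borel_measurable M'"
      using Ym[OF j] by (simp add: measurable_def)
    have set1: "Ys j -` {1} \<inter> space M \<in> sets M'" using measurable_sets[OF Ym[OF j] b1] by simp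
    have "integral\<^sup>L M' (Ys j) = integral\<^sup>L M' (indicator (Ys j -` {1} \<inter> space M))"
    proof (rule integral_cong_AE[OF YmM' borel_measurable_indicator[OF set1]])
      show "AE x in M'. Ys j x = indicator (Ys j -` {1} \<inter> space M) x"
        using AE01[OF j] AE_space[of M'] by eventually_elim (auto simp: indicator_def)
    qed
    also have "\<dots> = measure M' (Ys j -` {1} \<inter> space M)" by simp
    also have "Ys j -` {1} \<inter> space M = {\<omega>\<in>space M. \<forall>i\<in>{j}. Ys i \<omega> \<in> {1}}" by auto
    also have "measure M' \<dots> = measure D (R (r j) \<inter> snd -` {1}) / pop_p D f (r j)"
      using Lem[of "{j}" "\<lambda>_. {1}"] j by simp
    finally show ?thesis .
  qed
  have ystar_eq: "ystar D f s = measure D (R s \<inter> snd -` {1}) / pop_p D f s" for s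
  proof -
    have Rs: "{z \<in> space D. f (fst z) = s} = R s" by (simp add: R_def spaceD)
    have m1: "(\<lambda>z. snd z * indicator (R s) z) \<in> borel_measurable D"
      by (subst measurable_cong_sets[OF setsD refl]) measurable
    have "integral\<^sup>L D (\<lambda>z. snd z * indicator (R s) z) = integral\<^sup>L D (indicator (R s \<inter> snd -` {1}))"
    proof (rule integral_cong_AE[OF m1])
      show "indicator (R s \<inter> snd -` {1}) \<in> borel_measurable D"
        using RC2[OF b1] by (intro borel_measurable_indicator) (simp add: setsD)
      show "AE x in D. snd x * indicator (R s) x = indicator (R s \<inter> snd -` {1}) x"
        using assms(5) by eventually_elim (auto simp: indicator_def)
    qed
    also have "\<dots> = measure D (R s \<inter> snd -` {1})"
    proof -
      have "R s \<inter> snd -` {1} \<inter> space D = R s \<inter> snd -` {1}"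
        using sets.sets_into_space[OF Rsets, of s] by (auto simp: spaceD)
      thus ?thesis by simp
    qed
    finally show ?thesis unfolding ystar_def Rs by simp
  qed
  have indM': "P'.indep_vars (\<lambda>_. borel) Ys {..<n}"
    unfolding P'.indep_vars_def2
  proof (intro conjI ballI P'.indep_setsI)
    fix i assume "i \<in> {..<n}"
    thus "Ys i \<in> measurable M' borel" using Ym by (simp add: measurable_def)
  next
    fix i assume "i \<in> {..<n}"
    thus "{Ys i -` A \<inter> space M' |A. A \<in> sets borel} \<subseteq> sets M'"
      using Ym measurable_sets by fastforce
  next
    fix A J assume J: "J \<noteq> {}" "J \<subseteq> {..<n}" "finite J"
      and A: "\<forall>j\<in>J. A j \<in> {Ys j -` A \<inter> space M' |A. A \<in> sets borel}"
    then obtain C where C: "\<forall>j\<in>J. A j = Ys j -` C j \<inter> space M \<and> C j \<in> sets borel"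
      by simp metis
    have "(\<Inter>j\<in>J. A j) = {\<omega>\<in>space M. \<forall>j\<in>J. Ys j \<omega> \<in> C j}" using C J(1) by auto
    hence "measure M' (\<Inter>j\<in>J. A j) = (\<Prod>j\<in>J. measure D (R (r j) \<inter> snd -` C j) / pop_p D f (r j))"
      using Lem[OF J(2)] C by simp
    also have "\<dots> = (\<Prod>j\<in>J. measure M' (A j))"
    proof (rule prod.cong[OF refl])
      fix j assume j: "j \<in> J"
      have "A j = {\<omega>\<in>space M. \<forall>i\<in>{j}. Ys i \<omega> \<in> C i}" using C j by auto
      thus "measure D (R (r j) \<inter> snd -` C j) / pop_p D f (r j) = measure M' (A j)"
        using Lem[of "{j}" C] j J(2) C by auto
    qed
    finally show "measure M' (\<Inter>j\<in>J. A j) = (\<Prod>j\<in>J. measure M' (A j))" .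
  qed
  define J where "J s = {j. j < n \<and> r j = s}" for s
  define m where "m s = card (J s)" for s
  have JsubN: "J s \<subseteq> {..<n}" for s by (auto simp: J_def)
  have finJ: "finite (J s)" for s using JsubN finite_subset by blast
  have phatm: "phat n r s = real (m s) / real n" for s by (simp add: phat_def m_def J_def)
  have mpos: "m s > 0" if s: "s \<in> S" for s
  proof -
    have "pop_p D f s - phat n r s < c * pop_p D f s" using assms(15) s by auto
    hence "(1 - c) * pop_p D f s < phat n r s" by (simp add: algebra_simps)
    moreover have "0 < (1 - c) * pop_p D f s" using ppos[OF s] assms(11) by simp
    ultimately have "phat n r s > 0" by linarith
    thus ?thesis unfolding phatm by (auto intro: gr0I)
  qed
  have Sne: "S \<noteq> {}" using assms(2,14) by auto
  have cardS: "card S > 0" using Sne assms(7) by (simp add: card_gt_0_iff)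
  define L where "L = ln (2 * real (card S) / \<delta>)"
  have Lpos: "L > 0"
  proof -
    have "1 < 2 * real (card S) / \<delta>" using cardS assms(12,13) by (simp add: field_simps)
    thus ?thesis unfolding L_def by simp
  qed
  define eps where "eps s = sqrt (real (m s) * L / 2)" for s
  define g where "g s \<omega> = (\<Sum>j\<in>J s. Ys j \<omega>)" for s \<omega>
  have gm[measurable]: "g s \<in> borel_measurable M" for s
    unfolding g_def using JsubN Ym by (intro borel_measurable_sum) auto
  define Bad where "Bad s = {\<omega>\<in>space M. eps s \<le> \<bar>g s \<omega> - real (m s) * ystar D f s\<bar>}" for s
  have Bsets: "Bad s \<in> events" for s
    unfolding Bad_def by measurable
  have badP: "measure M' (Bad s) \<le> \<delta> / real (card S)" if s: "s \<in> S" for s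
  proof -
    interpret H: Hoeffding_ineq M' "J s" Ys "\<lambda>_. 0" "\<lambda>_. 1" "\<Sum>j\<in>J s. integral\<^sup>L M' (Ys j)"
    proof unfold_locales
      show "finite (J s)" by (rule finJ)
      show "P'.indep_vars (\<lambda>_. borel) Ys (J s)"
        by (rule P'.indep_vars_subset[OF indM' JsubN])
      fix i assume i: "i \<in> J s"
      hence "i < n" using JsubN by auto
      show "AE x in M'. Ys i x \<in> {0..1}" using AE01[OF \<open>i < n\<close>] by (rule eventually_mono) auto
    qed simp
    have mu: "(\<Sum>j\<in>J s. integral\<^sup>L M' (Ys j)) = real (m s) * ystar D f s"
    proof -
      have "(\<Sum>j\<in>J s. integral\<^sup>L M' (Ys j)) = (\<Sum>j\<in>J s. ystar D f s)"
        by (intro sum.cong refl) (auto simp: J_def EY ystar_eq)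
      thus ?thesis by (simp add: m_def)
    qed
    have sq: "(\<Sum>i\<in>J s. (1 - 0)\<^sup>2) = real (m s)" by (simp add: m_def)
    have "measure M' {x\<in>space M'. eps s \<le> \<bar>(\<Sum>i\<in>J s. Ys i x) - (\<Sum>j\<in>J s. integral\<^sup>L M' (Ys j))\<bar>}
        \<le> 2 * exp (-2 * (eps s)\<^sup>2 / (\<Sum>i\<in>J s. (1 - 0)\<^sup>2))"
      by (rule H.Hoeffding_ineq_abs_ge) (use mpos[OF s] Lpos in \<open>simp_all add: eps_def m_def\<close>)
    also have "-2 * (eps s)\<^sup>2 / (\<Sum>i\<in>J s. (1 - 0)\<^sup>2) = - L"
      unfolding sq eps_def using mpos[OF s] Lpos by simp
    also have "2 * exp (- L) = \<delta> / real (card S)"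
      unfolding L_def using cardS assms(12) by (simp add: exp_minus field_simps)
    finally show ?thesis unfolding Bad_def g_def mu by simp
  qed
  define U where "U = (\<Union>s\<in>S. Bad s)"
  have Usets: "U \<in> events" unfolding U_def using Bsets assms(7) by auto
  have "measure M' U \<le> (\<Sum>s\<in>S. measure M' (Bad s))"
    unfolding U_def by (rule measure_UNION_le) (use assms(7) Bsets in auto)
  also have "\<dots> \<le> (\<Sum>s\<in>S. \<delta> / real (card S))" by (intro sum_mono badP)
  also have "\<dots> = \<delta>" using cardS by simp
  finally have PU: "measure M' U \<le> \<delta>" .
  define G where "G = space M - U"
  have Gsets: "G \<in> events" unfolding G_def using Usets by auto
  have PG: "measure M' G \<ge> 1 - \<delta>"
    using P'.prob_compl[of U] Usets PU by (simp add: G_def)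
  have QG: "measure M (Q \<inter> G) = measure M' G * prob Q"
    using mM'[OF Gsets] PQpos by simp
  define E where "E = {\<omega> \<in> space M. (0 \<le> (\<Sum>s\<in>S. phat n (\<lambda>j. f (Xs j \<omega>)) s
                 * (yhat n (\<lambda>j. f (Xs j \<omega>)) (\<lambda>j. Ys j \<omega>) s - ystar D f s)\<^sup>2)
          \<and> (\<Sum>s\<in>S. phat n (\<lambda>j. f (Xs j \<omega>)) s
                 * (yhat n (\<lambda>j. f (Xs j \<omega>)) (\<lambda>j. Ys j \<omega>) s - ystar D f s)\<^sup>2)
            \<le> real (card S) / (2 * real n) * ln (2 * real (card S) / \<delta>)) \<and> (\<forall>j<n. f (Xs j \<omega>) = r j)}"
  define T where "T \<omega> = (\<Sum>s\<in>S. phat n r s * (g s \<omega> / real (m s) - ystar D f s)\<^sup>2)" for \<omega>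
  have onQ: "phat n (\<lambda>j. f (Xs j \<omega>)) s * (yhat n (\<lambda>j. f (Xs j \<omega>)) (\<lambda>j. Ys j \<omega>) s - ystar D f s)\<^sup>2
      = phat n r s * (g s \<omega> / real (m s) - ystar D f s)\<^sup>2" if w: "\<omega> \<in> Q" for \<omega> s
  proof -
    have "{j. j < n \<and> f (Xs j \<omega>) = s} = J s" using w by (auto simp: Q_def J_def)
    thus ?thesis by (simp add: phat_def yhat_def g_def m_def J_def)
  qed
  have ET: "E = Q \<inter> {\<omega>\<in>space M. 0 \<le> T \<omega> \<and> T \<omega> \<le> real (card S) / (2 * real n) * L}"
  proof -
    have "\<omega> \<in> E \<longleftrightarrow> \<omega> \<in> Q \<inter> {\<omega>\<in>space M. 0 \<le> T \<omega> \<and> T \<omega> \<le> real (card S) / (2 * real n) * L}" for \<omega>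
    proof (cases "\<omega> \<in> Q")
      case True
      thus ?thesis using onQ[OF True] by (simp add: E_def T_def L_def Q_def)
    next
      case False
      thus ?thesis by (auto simp: E_def Q_def)
    qed
    thus ?thesis by blast
  qed
  have Tm: "T \<in> borel_measurable M" unfolding T_def by measurable
  have Esets: "E \<in> events"
    unfolding ET using Qsets Tm by (intro sets.Int) (auto intro: Qsets)
  have QGE: "Q \<inter> G \<subseteq> E"
  proof
    fix \<omega> assume w: "\<omega> \<in> Q \<inter> G"
    have wsp: "\<omega> \<in> space M" using w by (auto simp: G_def)
    have tb: "phat n r s * (g s \<omega> / real (m s) - ystar D f s)\<^sup>2 \<le> L / (2 * real n)" if s: "s \<in> S" for s
    proof -
      have "\<omega> \<notin> Bad s" using w s by (auto simp: G_def U_def)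
      hence "\<bar>g s \<omega> - real (m s) * ystar D f s\<bar> < eps s" using wsp by (auto simp: Bad_def)
      thus ?thesis unfolding phatm
        by (intro term_bound[OF mpos[OF s] assms(2)]) (use Lpos in \<open>auto simp: eps_def\<close>)
    qed
    have "T \<omega> \<le> (\<Sum>s\<in>S. L / (2 * real n))" unfolding T_def by (intro sum_mono tb)
    also have "\<dots> = real (card S) / (2 * real n) * L" by simp
    finally have "T \<omega> \<le> real (card S) / (2 * real n) * L" .
    moreover have "0 \<le> T \<omega>" unfolding T_def by (intro sum_nonneg mult_nonneg_nonneg) (auto simp: phatm)
    ultimately show "\<omega> \<in> E" unfolding ET using w wsp by auto
  qed
  have "(1 - \<delta>) * prob Q \<le> measure M' G * prob Q"
    using PG PQpos by (intro mult_right_mono) auto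
  also have "\<dots> = measure M (Q \<inter> G)" using QG by simp
  also have "\<dots> \<le> measure M E" using QGE Esets by (intro finite_measure_mono)
  finally have "(1 - \<delta>) * prob Q \<le> measure M E" .
  hence "1 - \<delta> \<le> measure M E / prob Q" using PQpos by (simp add: field_simps)
  moreover have "condP M
      (\<lambda>\<omega>. 0 \<le> (\<Sum>s\<in>S. phat n (\<lambda>j. f (Xs j \<omega>)) s
                 * (yhat n (\<lambda>j. f (Xs j \<omega>)) (\<lambda>j. Ys j \<omega>) s - ystar D f s)\<^sup>2)
          \<and> (\<Sum>s\<in>S. phat n (\<lambda>j. f (Xs j \<omega>)) s
                 * (yhat n (\<lambda>j. f (Xs j \<omega>)) (\<lambda>j. Ys j \<omega>) s - ystar D f s)\<^sup>2)
            \<le> real (card S) / (2 * real n) * ln (2 * real (card S) / \<delta>))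
      (\<lambda>\<omega>. \<forall>j<n. f (Xs j \<omega>) = r j) = measure M E / prob Q"
    unfolding condP_def E_def Q_def by simp
  ultimately show ?thesis by simp
qed
end
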